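(* Let $n\ge4$ and let $\lambda=(a_1,\dots,a_n)$ (usual coordinates) be a dominant weight of $SL(n)$ such that all $a_i\notin\mathbb Z$ and $|a_i|>1$ for some $i$. If $M(\lambda)$ contains no point three of whose coordinates equal $\alpha+1,\alpha,\alpha-1$ for some $\alpha\in\mathbb R$, then $$\lambda=\Big(\tfrac{2n-2}{n},-\tfrac2n,\dots,-\tfrac2n\Big)\quad\text{or}\quad \lambda=\Big(\tfrac2n,\dots,\tfrac2n,-\tfrac{2n-2}{n}\Big).$$
   Context: Setup for $SL(n)$: $\varepsilon_1,\dots,\varepsilon_n$ is the standard basis of $\mathbb Q^n$, $e_i=\varepsilon_i-\frac1n(1,\dots,1)$; the character lattice $\mathfrak X(T)$ of the diagonal torus is identified with the $\mathbb Z$-span of $e_1,\dots,e_n$ inside $\{y\in\mathbb Q^n:\sum y_i=0\}$ (the $y_i$ are the "usual coordinates"). $W=S_n$ acts by permuting coordinates. A weight is dominant if $y_1\ge y_2\ge\dots\ge y_n$. The root lattice is $\Phi=\{\sum a_ie_i\mid a_i\in\mathbb Z,\ \sum a_i\equiv0\pmod n\}$. For a dominant weight $\lambda$, $M(\lambda)=\mathrm{conv}\{w\lambda\mid w\in W\}\cap(\lambda+\Phi)$. *)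

theory Defs
  imports "HOL-Analysis.Analysis"
begin

(* Vectors in Q^n (here R^n) are modelled as functions nat => real, coordinates
   0..n-1 (the paper's 1..n), and value 0 outside {..<n}. *)

definition e_vec :: "nat \<Rightarrow> nat \<Rightarrow> nat \<Rightarrow> real" where
  "e_vec n j = (\<lambda>i. if i < n then (if i = j then 1 else 0) - 1 / real n else 0)"

definition lin_comb :: "nat \<Rightarrow> (nat \<Rightarrow> int) \<Rightarrow> nat \<Rightarrow> real" where
  "lin_comb n a = (\<lambda>i. \<Sum>j<n. real_of_int (a j) * e_vec n j i)"

definition weight_lattice :: "nat \<Rightarrow> (nat \<Rightarrow> real) set" where
  "weight_lattice n = {y. \<exists>a. y = lin_comb n a}"

definition root_lattice :: "nat \<Rightarrow> (nat \<Rightarrow> real) set" where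
  "root_lattice n = {y. \<exists>a. (\<Sum>j<n. a j) mod int n = 0 \<and> y = lin_comb n a}"

definition dominant :: "nat \<Rightarrow> (nat \<Rightarrow> real) \<Rightarrow> bool" where
  "dominant n y \<longleftrightarrow> (\<forall>i j. i \<le> j \<longrightarrow> j < n \<longrightarrow> y j \<le> y i)"

definition weyl_orbit :: "nat \<Rightarrow> (nat \<Rightarrow> real) \<Rightarrow> (nat \<Rightarrow> real) set" where
  "weyl_orbit n y = {y \<circ> \<sigma> | \<sigma>. \<sigma> permutes {..<n}}"

definition conv_fin :: "(nat \<Rightarrow> real) set \<Rightarrow> (nat \<Rightarrow> real) set" where
  "conv_fin S = {x. \<exists>u. (\<forall>s\<in>S. 0 \<le> u s) \<and> (\<Sum>s\<in>S. u s) = 1 \<and>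
                        x = (\<lambda>i. \<Sum>s\<in>S. u s * s i)}"

definition M_set :: "nat \<Rightarrow> (nat \<Rightarrow> real) \<Rightarrow> (nat \<Rightarrow> real) set" where
  "M_set n y = conv_fin (weyl_orbit n y) \<inter> {x. \<exists>r\<in>root_lattice n. x = (\<lambda>i. y i + r i)}"

end

theory Submission imports Defs begin


lemma sum_ind_r: "finite S \<Longrightarrow> (\<Sum>j\<in>S. f j * (if m = j then 1 else 0)) = (if m \<in> S then f m else (0::'a::comm_semiring_1))"
proof -
  assume "finite S"
  have "(\<Sum>j\<in>S. f j * (if m = j then 1 else 0)) = (\<Sum>j\<in>S. if j = m then f j else 0)"
    by (rule sum.cong) auto
  thus ?thesis using \<open>finite S\<close> by (simp add: sum.delta')
qed

lemma sum_ind_l: "finite S \<Longrightarrow> (\<Sum>j\<in>S. (if j = m then 1 else 0) * f j) = (if m \<in> S then f m else (0::'a::comm_semiring_1))"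
proof -
  assume "finite S"
  have "(\<Sum>j\<in>S. (if j = m then 1 else 0) * f j) = (\<Sum>j\<in>S. if j = m then f j else 0)"
    by (rule sum.cong) auto
  thus ?thesis using \<open>finite S\<close> by (simp add: sum.delta')
qed

lemma lin_comb_eval:
  "lin_comb n a m = (if m < n then real_of_int (a m) - real_of_int (\<Sum>j<n. a j) / real n else 0)"
proof (cases "m < n")
  case True
  have "lin_comb n a m = (\<Sum>j<n. real_of_int (a j) * ((if m = j then 1 else 0) - 1 / real n))"
    unfolding lin_comb_def e_vec_def using True by simp
  also have "\<dots> = (\<Sum>j<n. real_of_int (a j) * (if m = j then 1 else 0)) - (\<Sum>j<n. real_of_int (a j)) / real n"
    by (simp add: right_diff_distrib sum_subtractf sum_divide_distrib mult_ac)
  also have "\<dots> = real_of_int (a m) - real_of_int (\<Sum>j<n. a j) / real n"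
    using True by (simp add: sum_ind_r)
  finally show ?thesis using True by simp
qed (simp add: lin_comb_def e_vec_def)

definition tr :: "(nat \<Rightarrow> real) \<Rightarrow> nat \<Rightarrow> nat \<Rightarrow> nat \<Rightarrow> real" where
  "tr x i j = (\<lambda>k. x k - (if k = i then 1 else 0) + (if k = j then 1 else 0))"

lemma finite_orbit: "finite (weyl_orbit n y)"
proof -
  have "weyl_orbit n y = (\<lambda>\<sigma>. y \<circ> \<sigma>) ` {\<sigma>. \<sigma> permutes {..<n}}"
    unfolding weyl_orbit_def by auto
  thus ?thesis using finite_permutations[of "{..<n}"] by simp
qed

lemma lam_in_M: assumes "lam \<in> weight_lattice n" shows "lam \<in> M_set n lam"
proof -
  have orb: "lam \<in> weyl_orbit n lam" unfolding weyl_orbit_def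
    by (rule CollectI, rule exI[of _ id]) (auto simp: permutes_id)
  have "lam \<in> conv_fin (weyl_orbit n lam)"
    unfolding conv_fin_def
    apply (rule CollectI, rule exI[of _ "\<lambda>s. if s = lam then 1 else 0"])
    using orb finite_orbit[of n lam] sum_ind_l[of "weyl_orbit n lam" lam "\<lambda>_. 1::real"]
      sum_ind_l[of "weyl_orbit n lam" lam "\<lambda>s. s _::real"]
    by auto
  moreover have "(\<lambda>_. 0) \<in> root_lattice n"
    unfolding root_lattice_def
    by (rule CollectI, rule exI[of _ "\<lambda>_. 0"]) (auto simp: lin_comb_eval fun_eq_iff)
  ultimately show ?thesis unfolding M_set_def by (auto intro!: bexI[of _ "\<lambda>_. 0"])
qed

lemma orbit_tau: assumes "s \<in> weyl_orbit n y" "i < n" "j < n"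
  shows "s \<circ> Transposition.transpose i j \<in> weyl_orbit n y"
proof -
  obtain \<sigma> where s: "s = y \<circ> \<sigma>" "\<sigma> permutes {..<n}" using assms(1) unfolding weyl_orbit_def by auto
  have "\<sigma> \<circ> Transposition.transpose i j permutes {..<n}"
    by (rule permutes_compose[OF permutes_swap_id s(2)]) (use assms in auto)
  thus ?thesis unfolding weyl_orbit_def using s by (auto simp: comp_assoc)
qed

lemma orbit_reindex: assumes "i < n" "j < n"
  shows "(\<Sum>s\<in>weyl_orbit n y. g (s \<circ> Transposition.transpose i j)) = (\<Sum>s\<in>weyl_orbit n y. g s)"
  by (rule sum.reindex_bij_witness[where i="\<lambda>s. s \<circ> Transposition.transpose i j" and j="\<lambda>s. s \<circ> Transposition.transpose i j"])
     (auto simp: comp_assoc orbit_tau assms)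

lemma tr_in_M: assumes "x \<in> M_set n lam" "i<n" "j<n" "i\<noteq>j" "x i - x j \<ge> 1"
  shows "tr x i j \<in> M_set n lam"
proof -
  let ?O = "weyl_orbit n lam"
  let ?\<tau> = "Transposition.transpose i j"
  obtain u where u: "\<forall>s\<in>?O. 0 \<le> u s" "(\<Sum>s\<in>?O. u s) = 1" "x = (\<lambda>k. \<Sum>s\<in>?O. u s * s k)"
    using assms(1) unfolding M_set_def conv_fin_def by auto
  obtain r where r: "r \<in> root_lattice n" "x = (\<lambda>k. lam k + r k)"
    using assms(1) unfolding M_set_def by auto
  obtain a where a: "int n dvd (\<Sum>j<n. a j)" "r = lin_comb n a"
    using r(1) unfolding root_lattice_def by auto
  define d where "d = x i - x j"
  define t where "t = 1 / d"
  have d1: "d \<ge> 1" using assms(5) d_def by simp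
  have t01: "0 \<le> t" "t \<le> 1" using d1 unfolding t_def by auto
  define u' where "u' s = (1 - t) * u s + t * u (s \<circ> ?\<tau>)" for s
  have "\<forall>s\<in>?O. 0 \<le> u' s"
    using u(1) t01 orbit_tau[OF _ assms(2,3)] unfolding u'_def by auto
  moreover have "(\<Sum>s\<in>?O. u' s) = 1"
    unfolding u'_def using u(2)
    by (simp add: sum.distrib sum_distrib_left[symmetric] orbit_reindex[OF assms(2,3), of u])
  moreover have "tr x i j = (\<lambda>k. \<Sum>s\<in>?O. u' s * s k)"
  proof
    fix k
    have "(\<Sum>s\<in>?O. u (s \<circ> ?\<tau>) * s k) = (\<Sum>s\<in>?O. u ((s \<circ> ?\<tau>) \<circ> ?\<tau>) * (s \<circ> ?\<tau>) k)"
      using orbit_reindex[OF assms(2,3), of "\<lambda>s. u (s \<circ> ?\<tau>) * s k"] by simp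
    also have "\<dots> = x (?\<tau> k)" using u(3) by (simp add: comp_assoc)
    finally have e: "(\<Sum>s\<in>?O. u (s \<circ> ?\<tau>) * s k) = x (?\<tau> k)" .
    have "(\<Sum>s\<in>?O. u' s * s k) = (1 - t) * (\<Sum>s\<in>?O. u s * s k) + t * (\<Sum>s\<in>?O. u (s \<circ> ?\<tau>) * s k)"
      unfolding u'_def sum_distrib_left sum.distrib[symmetric] by (rule sum.cong) (auto simp: algebra_simps)
    also have "\<dots> = (1 - t) * x k + t * x (?\<tau> k)" using e u(3) by simp
    also have "\<dots> = tr x i j k"
    proof -
      have td: "t * d = 1" using d1 unfolding t_def by simp
      show ?thesis
        using assms(4) td unfolding tr_def d_def
        by (cases "k = i"; cases "k = j") (auto simp: Transposition.transpose_def algebra_simps)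
    qed
    finally show "tr x i j k = (\<Sum>s\<in>?O. u' s * s k)" by simp
  qed
  ultimately have c: "tr x i j \<in> conv_fin ?O" unfolding conv_fin_def by blast
  define a' where "a' k = a k - (if k = i then 1 else 0) + (if k = j then 1 else 0)" for k
  have sa: "(\<Sum>k<n. a' k) = (\<Sum>k<n. a k)"
    unfolding a'_def using assms(2,3) by (simp add: sum.distrib sum_subtractf)
  have "lin_comb n a' \<in> root_lattice n"
    unfolding root_lattice_def using sa a(1) by (auto intro!: exI[of _ a'])
  moreover have "tr x i j = (\<lambda>k. lam k + lin_comb n a' k)"
    using assms(2,3) unfolding tr_def r(2) a(2) 
    by (auto simp: fun_eq_iff lin_comb_eval sa; simp add: a'_def)
  ultimately show ?thesis using c unfolding M_set_def by blast
qed

lemma wl_props: assumes "lam \<in> weight_lattice n"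
  shows "\<And>k. k \<ge> n \<Longrightarrow> lam k = 0"
    and "\<And>k l. k < n \<Longrightarrow> l < n \<Longrightarrow> lam k - lam l \<in> \<int>"
    and "n > 0 \<Longrightarrow> (\<Sum>k<n. lam k) = 0"
proof -
  obtain b where b: "lam = lin_comb n b" using assms unfolding weight_lattice_def by auto
  show "\<And>k. k \<ge> n \<Longrightarrow> lam k = 0" using b by (simp add: lin_comb_eval)
  show "\<And>k l. k < n \<Longrightarrow> l < n \<Longrightarrow> lam k - lam l \<in> \<int>"
    using b by (simp add: lin_comb_eval)
  show "n > 0 \<Longrightarrow> (\<Sum>k<n. lam k) = 0"
    using b by (simp add: lin_comb_eval sum_subtractf)
qed

lemma M_int: assumes "x \<in> M_set n lam" "lam \<in> weight_lattice n" "k < n" "l < n"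
  shows "x k - x l \<in> \<int>"
proof -
  obtain r where r: "r \<in> root_lattice n" "x = (\<lambda>k. lam k + r k)"
    using assms(1) unfolding M_set_def by auto
  obtain a where a: "r = lin_comb n a"
    using r(1) unfolding root_lattice_def by auto
  have "x k - x l = (lam k - lam l) + (of_int (a k) - of_int (a l))"
    using r(2) a assms(3,4) by (simp add: lin_comb_eval)
  thus ?thesis using wl_props(2)[OF assms(2,3,4)] by simp
qed

lemma tr_sq: assumes "i < n" "j < n" "i \<noteq> j"
  shows "(\<Sum>k<n. (tr x i j k)^2) = (\<Sum>k<n. (x k)^2) - 2 * (x i - x j) + 2"
proof -
  have "(\<Sum>k<n. (tr x i j k)^2) = (\<Sum>k<n. (x k)^2 + (if k = i then 1 - 2 * x i else 0) + (if k = j then 1 + 2 * x j else 0))"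
    by (rule sum.cong) (auto simp: tr_def power2_eq_square algebra_simps assms(3))
  also have "\<dots> = (\<Sum>k<n. (x k)^2) - 2 * (x i - x j) + 2"
    using assms by (simp add: sum.distrib)
  finally show ?thesis .
qed



lemma int_diff: "a - b \<in> \<int> \<Longrightarrow> \<exists>z::int. a = b + of_int z"
  by (metis Ints_cases add.commute diff_add_cancel)

lemma stepA:
  fixes G :: "(nat \<Rightarrow> real) set"
  assumes n4: "n \<ge> 4"
  and cl: "\<And>x i j. x\<in>G \<Longrightarrow> i<n \<Longrightarrow> j<n \<Longrightarrow> i\<noteq>j \<Longrightarrow> x i - x j \<ge> 1 \<Longrightarrow> tr x i j \<in> G"
  and intd: "\<And>x k l. x\<in>G \<Longrightarrow> k<n \<Longrightarrow> l<n \<Longrightarrow> x k - x l \<in> \<int>"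
  and notri: "\<And>x a b c. x\<in>G \<Longrightarrow> a<n \<Longrightarrow> b<n \<Longrightarrow> c<n \<Longrightarrow> x a = x b + 1 \<Longrightarrow> x c = x b - 1 \<Longrightarrow> False"
  and x: "x \<in> G" and ij: "i < n" "j < n"
  and mx: "\<forall>k<n. x k \<le> x i" and mn: "\<forall>k<n. x j \<le> x k"
  and d3: "x i - x j \<ge> 3"
  and tb: "\<forall>k<n. \<forall>l<n. tr x i j k - tr x i j l \<le> 2"
  shows False
proof -
  have ineq: "i \<noteq> j" using d3 by auto
  have "\<exists>k::nat. k < 3 \<and> k \<noteq> i \<and> k \<noteq> j" by presburger
  then obtain k where k: "k < 3" "k \<noteq> i" "k \<noteq> j" by blast
  have "\<exists>l::nat. l < 4 \<and> l \<noteq> i \<and> l \<noteq> j \<and> l \<noteq> k" by presburger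
  then obtain l where l: "l < 4" "l \<noteq> i" "l \<noteq> j" "l \<noteq> k" by blast
  have kn: "k < n" "l < n" using k l n4 by auto
  obtain d where d: "x i = x j + of_int d" using int_diff[OF intd[OF x ij]] by auto
  obtain p where p: "x i = x k + of_int p" using int_diff[OF intd[OF x ij(1) kn(1)]] by auto
  obtain q where q: "x i = x l + of_int q" using int_diff[OF intd[OF x ij(1) kn(2)]] by auto
  have t1: "tr x i j i - tr x i j j \<le> 2" using tb ij by auto
  have t2: "tr x i j i - tr x i j k \<le> 2" "tr x i j i - tr x i j l \<le> 2" using tb ij kn by auto
  have t3: "tr x i j k - tr x i j j \<le> 2" "tr x i j l - tr x i j j \<le> 2" using tb ij kn by auto
  have "real_of_int d \<le> 4" using t1 d ineq by (simp add: tr_def)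
  hence d4: "d \<le> 4" by linarith
  have "real_of_int d \<ge> 3" using d3 d by simp
  hence d3': "d \<ge> 3" by linarith
  have "real_of_int p \<le> 3" "real_of_int q \<le> 3" using t2 p q k l ineq by (simp_all add: tr_def)
  hence pq3: "p \<le> 3" "q \<le> 3" by linarith+
  have "real_of_int d - real_of_int p \<le> 3" "real_of_int d - real_of_int q \<le> 3"
    using t3 p q d k l ineq by (simp_all add: tr_def)
  hence dpq: "d - p \<le> 3" "d - q \<le> 3" by linarith+
  have "real_of_int p \<ge> 0" "real_of_int q \<ge> 0" using mx kn p q by auto
  hence pq0: "p \<ge> 0" "q \<ge> 0" by linarith+
  have "real_of_int p \<le> real_of_int d" "real_of_int q \<le> real_of_int d" using mn kn p q d by auto
  hence pqd: "p \<le> d" "q \<le> d" by linarith+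
  have y1: "tr x i j \<in> G" using cl[OF x ij ineq] d3 by simp
  let ?y = "tr x i j"
  have yv: "?y i = x i - 1" "?y j = x i - of_int d + 1" "?y k = x i - of_int p" "?y l = x i - of_int q"
    using d p q k l ineq by (auto simp: tr_def)
  note kl = k(2,3) l(2,3,4)
  have dcases: "d = 3 \<or> d = 4" using d4 d3' by linarith
  show False
  proof (cases "d = 3")
    case True
    show False
    proof (cases "p = 0 \<or> q = 0")
      case True
      then show False
      proof
        assume "p = 0" thus False using notri[OF y1 kn(1) ij(1) ij(2)] yv \<open>d = 3\<close> by simp
      next
        assume "q = 0" thus False using notri[OF y1 kn(2) ij(1) ij(2)] yv \<open>d = 3\<close> by simp
      qed
    next
      case F0: False
      show False
      proof (cases "p = 3 \<or> q = 3")
        case True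
        then show False
        proof
          assume "p = 3" thus False using notri[OF y1 ij(1) ij(2) kn(1)] yv \<open>d = 3\<close> by simp
        next
          assume "q = 3" thus False using notri[OF y1 ij(1) ij(2) kn(2)] yv \<open>d = 3\<close> by simp
        qed
      next
        case F3: False
        have pq: "p \<in> {1,2}" "q \<in> {1,2}" using F0 F3 pq0 pqd \<open>d = 3\<close> by auto
        show False
        proof (cases "p = q")
          case False
          hence "(p = 1 \<and> q = 2) \<or> (p = 2 \<and> q = 1)" using pq by auto
          thus False
          proof
            assume "p = 1 \<and> q = 2"
            thus False using notri[OF x kn(1) kn(2) ij(2)] p q d \<open>d = 3\<close> by simp
          next
            assume "p = 2 \<and> q = 1"
            thus False using notri[OF x kn(2) kn(1) ij(2)] p q d \<open>d = 3\<close> by simp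
          qed
        next
          case True
          hence "p = 1 \<or> p = 2" using pq by auto
          thus False
          proof
            assume p1: "p = 1"
            have z: "tr x k j \<in> G" using cl[OF x kn(1) ij(2)] kl p d p1 \<open>d = 3\<close> by simp
            show False using notri[OF z ij(1) kn(2) kn(1)] kl ineq p q d p1 True \<open>d = 3\<close>
              by (simp add: tr_def)
          next
            assume p2: "p = 2"
            have z: "tr x i k \<in> G" using cl[OF x ij(1) kn(1)] kl p p2 by simp
            show False using notri[OF z ij(1) kn(2) ij(2)] kl ineq p q d p2 True \<open>d = 3\<close>
              by (simp add: tr_def)
          qed
        qed
      qed
    qed
  next
    case False
    hence d4': "d = 4" using dcases by simp
    have pq: "p \<in> {1,2,3}" "q \<in> {1,2,3}" using pq3 dpq d4' by auto
    show False
    proof (cases "p = 2 \<or> q = 2")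
      case True
      then show False
      proof
        assume "p = 2" thus False using notri[OF y1 ij(1) kn(1) ij(2)] yv d4' by simp
      next
        assume "q = 2" thus False using notri[OF y1 ij(1) kn(2) ij(2)] yv d4' by simp
      qed
    next
      case F2: False
      hence pq': "p \<in> {1,3}" "q \<in> {1,3}" using pq by auto
      show False
      proof (cases "p = 1")
        case p1: True
        show False
        proof (cases "q = 1")
          case True
          have z: "tr x k j \<in> G" using cl[OF x kn(1) ij(2)] kl p d p1 d4' by simp
          show False using notri[OF z kn(2) kn(1) ij(2)] kl ineq p q d p1 True d4'
            by (simp add: tr_def)
        next
          case False
          hence q3: "q = 3" using pq' by auto
          have z0: "tr x i j \<in> G" by (rule y1)
          have z: "tr (tr x i j) k l \<in> G"
            using cl[OF z0 kn(1) kn(2) not_sym[OF kl(5)]] kl ineq p q d p1 q3 by (simp add: tr_def)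
          show False using notri[OF z ij(1) kn(1) ij(2)] kl ineq p q d p1 q3 d4'
            by (simp add: tr_def)
        qed
      next
        case False
        hence p3: "p = 3" using pq' by auto
        show False
        proof (cases "q = 1")
          case q1: True
          have z0: "tr x i j \<in> G" by (rule y1)
          have z: "tr (tr x i j) l k \<in> G"
            using cl[OF z0 kn(2) kn(1)] kl ineq p q d p3 q1 by (simp add: tr_def)
          show False using notri[OF z ij(1) kn(2) ij(2)] kl ineq p q d p3 q1 d4'
            by (simp add: tr_def)
        next
          case False
          hence q3: "q = 3" using pq' by auto
          have z: "tr x i k \<in> G" using cl[OF x ij(1) kn(1)] kl p p3 by simp
          show False using notri[OF z ij(1) kn(1) kn(2)] kl ineq p q d p3 q3 d4'
            by (simp add: tr_def)
        qed
      qed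
    qed
  qed
qed

lemma argmax_ex: assumes "(n::nat) > 0" shows "\<exists>i<n. \<forall>k<n. (f k::real) \<le> f i"
proof -
  have "Max (f ` {..<n}) \<in> f ` {..<n}" using assms by (intro Max_in finite_imageI) auto
  then obtain i where "i < n" "f i = Max (f ` {..<n})" by auto
  thus ?thesis by auto
qed

lemma argmin_ex: assumes "(n::nat) > 0" shows "\<exists>i<n. \<forall>k<n. f i \<le> (f k::real)"
  using argmax_ex[OF assms, of "\<lambda>k. - f k"] by auto

lemma no_big_range:
  fixes G :: "(nat \<Rightarrow> real) set"
  assumes n4: "n \<ge> 4"
  and cl: "\<And>x i j. x\<in>G \<Longrightarrow> i<n \<Longrightarrow> j<n \<Longrightarrow> i\<noteq>j \<Longrightarrow> x i - x j \<ge> 1 \<Longrightarrow> tr x i j \<in> G"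
  and intd: "\<And>x k l. x\<in>G \<Longrightarrow> k<n \<Longrightarrow> l<n \<Longrightarrow> x k - x l \<in> \<int>"
  and notri: "\<And>x a b c. x\<in>G \<Longrightarrow> a<n \<Longrightarrow> b<n \<Longrightarrow> c<n \<Longrightarrow> x a = x b + 1 \<Longrightarrow> x c = x b - 1 \<Longrightarrow> False"
  and x: "x \<in> G" and kl: "k < n" "l < n"
  shows "x k - x l \<le> 2"
proof -
  have main: "\<forall>x\<in>G. (\<Sum>k<n. (x k)^2) \<le> real N \<longrightarrow> (\<forall>k<n. \<forall>l<n. x k - x l \<le> 2)" for N
  proof (induction N rule: less_induct)
    case (less N)
    show ?case
    proof (intro ballI impI allI, rule ccontr)
      fix x k l assume xG: "x \<in> G" and P: "(\<Sum>k<n. (x k)^2) \<le> real N"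
        and kl: "k < n" "l < n" and nle: "\<not> x k - x l \<le> 2"
      obtain i where i: "i < n" "\<forall>k<n. x k \<le> x i" using argmax_ex[of n x] n4 by auto
      obtain j where j: "j < n" "\<forall>k<n. x j \<le> x k" using argmin_ex[of n x] n4 by auto
      have gt: "x i - x j > 2" using i j kl nle by force
      obtain z where z: "x i - x j = of_int z" using intd[OF xG i(1) j(1)] Ints_cases by metis
      have "z \<ge> 3" using gt z by linarith
      hence d3: "x i - x j \<ge> 3" using z by simp
      have ij: "i \<noteq> j" using gt by auto
      have yG: "tr x i j \<in> G" using cl[OF xG i(1) j(1) ij] d3 by simp
      have e: "(\<Sum>k<n. (tr x i j k)^2) = (\<Sum>k<n. (x k)^2) - 2 * (x i - x j) + 2"
        by (rule tr_sq[OF i(1) j(1) ij])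
      have Py: "(\<Sum>k<n. (tr x i j k)^2) \<le> real N - 4"
        unfolding e using d3 P by (smt (verit))
      have "0 \<le> (\<Sum>k<n. (tr x i j k)^2)" by (rule sum_nonneg) simp
      hence N4: "N \<ge> 4" using Py by linarith
      have "(\<Sum>k<n. (tr x i j k)^2) \<le> real (N - 1)" using Py N4 by (simp add: of_nat_diff)
      hence "\<forall>k<n. \<forall>l<n. tr x i j k - tr x i j l \<le> 2"
        using less.IH[of "N - 1"] N4 yG by auto
      thus False using stepA[of n G x i j] n4 cl intd notri xG i(1) j(1) i(2) j(2) d3 by blast
    qed
  qed
  have "(\<Sum>k<n. (x k)^2) \<le> real (nat \<lceil>\<Sum>k<n. (x k)^2\<rceil>)" by linarith
  thus ?thesis using main x kl by blast
qed



theorem lemma10: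
  fixes n :: nat and lam :: "nat \<Rightarrow> real"
  assumes "n \<ge> 4"
    and "lam \<in> weight_lattice n"
    and "dominant n lam"
    and "\<forall>i<n. lam i \<notin> \<int>"
    and "\<exists>i<n. \<bar>lam i\<bar> > 1"
    and "\<not> (\<exists>x\<in>M_set n lam. \<exists>\<alpha>::real. \<exists>i<n. \<exists>j<n. \<exists>k<n.
              x i = \<alpha> + 1 \<and> x j = \<alpha> \<and> x k = \<alpha> - 1)"
  shows "lam = (\<lambda>i. if i = 0 then (2 * real n - 2) / real n
                    else if i < n then - 2 / real n else 0)
       \<or> lam = (\<lambda>i. if i < n - 1 then 2 / real n
                    else if i = n - 1 then - (2 * real n - 2) / real n else 0)"
proof -
  let ?G = "M_set n lam"
  have n4: "n \<ge> 4" by fact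
  have n0: "n > 0" using n4 by simp
  have cl: "\<And>x i j. x\<in>?G \<Longrightarrow> i<n \<Longrightarrow> j<n \<Longrightarrow> i\<noteq>j \<Longrightarrow> x i - x j \<ge> 1 \<Longrightarrow> tr x i j \<in> ?G"
    by (rule tr_in_M)
  have intd: "\<And>x k l. x\<in>?G \<Longrightarrow> k<n \<Longrightarrow> l<n \<Longrightarrow> x k - x l \<in> \<int>"
    using M_int assms(2) by blast
  have notri: "\<And>x a b c. x\<in>?G \<Longrightarrow> a<n \<Longrightarrow> b<n \<Longrightarrow> c<n \<Longrightarrow> x a = x b + 1 \<Longrightarrow> x c = x b - 1 \<Longrightarrow> False"
    using assms(6) by blast
  have lamG: "lam \<in> ?G" using lam_in_M[OF assms(2)] .
  have rng: "\<And>k l. k < n \<Longrightarrow> l < n \<Longrightarrow> lam k - lam l \<le> 2"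
    using no_big_range[of n ?G lam] n4 cl intd notri lamG by blast
  have dom: "\<And>i j. i \<le> j \<Longrightarrow> j < n \<Longrightarrow> lam j \<le> lam i"
    using assms(3) unfolding dominant_def by blast
  have sum0: "(\<Sum>k<n. lam k) = 0" using wl_props(3)[OF assms(2) n0] .
  have out: "\<And>k. k \<ge> n \<Longrightarrow> lam k = 0" using wl_props(1)[OF assms(2)] .
  define a where "a = lam 0"
  define b where "b = lam (n - 1)"
  have bnds: "\<And>k. k < n \<Longrightarrow> b \<le> lam k \<and> lam k \<le> a"
    unfolding a_def b_def using dom by simp
  have gt1: "a - b > 1"
  proof (rule ccontr)
    assume "\<not> a - b > 1"
    hence ab: "a \<le> b + 1" by simp
    have "(\<Sum>k<n. b) \<le> (\<Sum>k<n. lam k)" by (rule sum_mono) (use bnds in auto)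
    hence s1: "real n * b \<le> 0" using sum0 by simp
    have "(\<Sum>k<n. lam k) \<le> (\<Sum>k<n. a)" by (rule sum_mono) (use bnds in auto)
    hence s2: "0 \<le> real n * a" using sum0 by simp
    have b0: "b \<le> 0" using s1 n0 by (simp add: mult_le_0_iff)
    have a0: "a \<ge> 0" using s2 n0 by (simp add: zero_le_mult_iff)
    have "b \<notin> \<int>" unfolding b_def using assms(4) n0 by simp
    hence "b \<noteq> 0" "b \<noteq> -1" by auto
    hence bb: "-1 < b" "b < 0" using b0 a0 ab by auto
    obtain i where i: "i < n" "\<bar>lam i\<bar> > 1" using assms(5) by blast
    show False using bnds[OF i(1)] i(2) bb ab by auto
  qed
  have "a - b \<in> \<int>" unfolding a_def b_def using intd[OF lamG, of 0 "n - 1"] n0 by simp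
  then obtain z where z: "a - b = of_int z" using Ints_cases by metis
  have "a - b \<le> 2" unfolding a_def b_def using rng n0 by simp
  hence "z = 2" using z gt1 by linarith
  hence ab2: "b = a - 2" using z by simp
  have vals: "\<And>k. k < n \<Longrightarrow> lam k = a \<or> lam k = a - 2"
  proof -
    fix k assume k: "k < n"
    have "lam k - b \<in> \<int>" unfolding b_def using intd[OF lamG k, of "n - 1"] n0 by simp
    then obtain w where w: "lam k - b = of_int w" using Ints_cases by metis
    have "0 \<le> w" "w \<le> 2" using bnds[OF k] w ab2 by linarith+
    moreover have "w \<noteq> 1"
    proof
      assume "w = 1"
      thus False using notri[OF lamG _ k, of 0 "n - 1"] n0 w ab2 unfolding a_def b_def by simp
    qed
    ultimately have "w = 0 \<or> w = 2" by linarith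
    thus "lam k = a \<or> lam k = a - 2" using w ab2 by auto
  qed
  have l0: "lam 0 = a" unfolding a_def ..
  have ln: "lam (n - 1) = a - 2" using ab2 unfolding b_def by simp
  show ?thesis
  proof (cases "lam 1 = a - 2")
    case True
    have rest: "\<And>k. 0 < k \<Longrightarrow> k < n \<Longrightarrow> lam k = a - 2"
    proof -
      fix k assume "0 < k" "k < n"
      hence "lam k \<le> lam 1" using dom by simp
      thus "lam k = a - 2" using True bnds[OF \<open>k < n\<close>] ab2 by simp
    qed
    have "(\<Sum>k<n. lam k) = (\<Sum>k<n. (a - 2) + (if k = 0 then 2 else 0))"
      by (rule sum.cong) (auto simp: rest l0)
    also have "\<dots> = real n * (a - 2) + 2" using n0 by (simp add: sum.distrib)
    finally have "real n * (a - 2) + 2 = 0" using sum0 by simp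
    hence aval: "a = (2 * real n - 2) / real n" using n0 by (simp add: field_simps)
    have "lam = (\<lambda>i. if i = 0 then (2 * real n - 2) / real n
                    else if i < n then - 2 / real n else 0)"
    proof
      fix i
      show "lam i = (if i = 0 then (2 * real n - 2) / real n
                    else if i < n then - 2 / real n else 0)"
        using rest[of i] out[of i] l0 aval n0 by (auto simp: field_simps)
    qed
    thus ?thesis ..
  next
    case False
    hence l1: "lam 1 = a" using vals[of 1] n4 by auto
    have ln2: "lam (n - 2) = a"
    proof (rule ccontr)
      assume "lam (n - 2) \<noteq> a"
      hence ln2': "lam (n - 2) = a - 2" using vals[of "n - 2"] n4 by auto
      have t: "tr lam 0 (n - 1) \<in> ?G" using cl[OF lamG, of 0 "n - 1"] n4 l0 ln by simp
      have ne: "Suc 0 \<noteq> n - Suc 0" "n - 2 \<noteq> n - Suc 0" "n - 2 \<noteq> 0" using n4 by arith+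
      show False using notri[OF t, of 1 0 "n - 2"] n4 l0 ln l1 ln2' ne by (simp add: tr_def)
    qed
    have rest: "\<And>k. k < n - 1 \<Longrightarrow> lam k = a"
    proof -
      fix k assume "k < n - 1"
      hence "lam (n - 2) \<le> lam k" using dom by simp
      thus "lam k = a" using ln2 bnds[of k] \<open>k < n - 1\<close> by simp
    qed
    have "(\<Sum>k<n. lam k) = (\<Sum>k<n. a - (if k = n - 1 then 2 else 0))"
      using ln by (intro sum.cong) (auto simp: rest)
    also have "\<dots> = real n * a - 2" using n0 by (simp add: sum_subtractf)
    finally have "real n * a - 2 = 0" using sum0 by simp
    hence aval: "a = 2 / real n" using n0 by (simp add: field_simps)
    have "lam = (\<lambda>i. if i < n - 1 then 2 / real n
                    else if i = n - 1 then - (2 * real n - 2) / real n else 0)"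
    proof
      fix i
      show "lam i = (if i < n - 1 then 2 / real n
                    else if i = n - 1 then - (2 * real n - 2) / real n else 0)"
        using rest[of i] out[of i] ln aval n0 by (auto simp: field_simps)
    qed
    thus ?thesis ..
  qed
qed

end
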